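(* Let $\mathcal{A}=\mathbb{C}\setminus(-\infty,0]$ and let $H$ be the principal branch on $\mathcal{A}$ given by $H(z)=\ln\frac{z(1+z)}{1+z^2}\big/\ln\frac{1+z^2}{1+z}$ for $z\ne1$ and $H(1)=1$ (principal logarithm, $-\pi<\arg<\pi$). For $z=re^{i\theta}\in\mathcal{A}$, the function $zH(z)$ tends to $0$ as $r\to\infty$, uniformly in $\theta$.
   Context: $H$ is the holomorphic extension to $\mathcal{A}$ of $H(x)=\frac{\ln x}{\ln(x^2+1)-\ln(x+1)}-1$, $x\in(0,\infty)$. *)

theory Defs
  imports "HOL-Analysis.Analysis"
begin

definition slitA :: "complex set" where
  "slitA = - {z. Im z = 0 \<and> Re z \<le> 0}"

definition H :: "complex \<Rightarrow> complex" where
  "H z = (if z = 1 then 1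
          else Ln (z * (1 + z) / (1 + z\<^sup>2)) / Ln ((1 + z\<^sup>2) / (1 + z)))"

end

theory Submission
  imports Defs
begin

lemma key:
  fixes z :: complex and e :: real
  assumes e: "e > 0" and r: "norm z > max 4 (1 + exp (4/e))"
  shows "cmod (z * H z) < e"
proof -
  define r where "r = norm z"
  have r4: "r > 4" and re: "r - 1 > exp (4/e)" using r unfolding r_def by auto
  have z1: "z \<noteq> 1" using r4 r_def by auto
  have n2: "norm (z^2) = r^2" by (simp add: r_def norm_power)
  have "norm (1 + z^2) \<ge> norm (z^2) - norm (1::complex)" using norm_triangle_ineq4[of "1 + z^2" 1] by simp
  hence A: "norm (1 + z^2) \<ge> r^2 - 1" using n2 by simp
  have B: "norm (1 + z) \<le> r + 1" using norm_triangle_ineq[of 1 z] r_def by simp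
  have C: "norm (z - 1) \<le> r + 1" using norm_triangle_ineq4[of z 1] r_def by simp
  have r21: "r^2 - 1 = (r-1)*(r+1)" by (simp add: algebra_simps power2_eq_square)
  have pos: "r^2 - 1 > 0" using r4 r21 by simp
  have nz: "1 + z^2 \<noteq> 0" using A pos by auto
  have nz2: "1 + z \<noteq> 0" using r4 r_def by (metis add.commute add_eq_0_iff norm_minus_cancel norm_one less_numeral_extra(4) order_less_trans one_less_numeral_iff semiring_norm(76))
  define d where "d = (z - 1) / (1 + z^2)"
  have u: "z * (1 + z) / (1 + z^2) = 1 + d"
    using nz by (simp add: d_def field_simps power2_eq_square)
  have "norm d \<le> (r+1) / (r^2 - 1)"
    unfolding d_def norm_divide using A C pos r4
    by (intro frac_le) auto
  also have "\<dots> = 1/(r-1)" using r21 r4 by simp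
  finally have d1: "norm d \<le> 1/(r-1)" .
  have "1/(r-1) < 1/2" using r4 by (simp add: field_simps)
  hence "norm (Ln (1 + d)) \<le> 2 * norm d" using d1 by (intro norm_Ln_le) simp
  hence N: "norm (Ln (1 + d)) \<le> 2/(r-1)" using d1 by simp
  define w where "w = (1 + z^2) / (1 + z)"
  have "norm w \<ge> (r^2 - 1)/(r+1)"
    unfolding w_def norm_divide using A B pos r4 nz2
    by (intro frac_le) auto
  hence w1: "norm w \<ge> r - 1" using r21 r4 by simp
  hence wnz: "w \<noteq> 0" using r4 by auto
  have "ln (r - 1) \<le> ln (norm w)" using w1 r4 by (intro ln_mono) auto
  also have "\<dots> = Re (Ln w)" using wnz by simp
  also have "\<dots> \<le> norm (Ln w)" by (rule complex_Re_le_cmod)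
  finally have D: "norm (Ln w) \<ge> ln (r-1)" .
  have "ln (exp (4/e)) < ln (r-1)" using re r4 by (intro ln_less_cancel_iff[THEN iffD2]) auto
  hence lr: "ln (r-1) > 4/e" by simp
  have "4/e > 0" using e by simp
  hence lpos: "ln (r-1) > 0" using lr by linarith
  have "cmod (z * H z) = r * norm (Ln (1 + d)) / norm (Ln w)"
    using z1 u by (simp add: H_def w_def r_def norm_mult norm_divide)
  also have "\<dots> \<le> r * (2/(r-1)) / ln (r-1)"
    using N D lpos r4 by (intro frac_le mult_left_mono) simp_all
  also have "\<dots> \<le> 4 / ln (r-1)"
    using lpos r4 by (intro divide_right_mono) (auto simp: field_simps)
  also have "\<dots> < e" using lr e lpos by (simp add: field_simps)
  finally show ?thesis .
qed

theorem lemma4p2: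
  shows "\<forall>\<epsilon>>0. \<exists>R. \<forall>r \<theta>. r > R \<and> - pi < \<theta> \<and> \<theta> < pi \<longrightarrow>
           cmod (complex_of_real r * exp (\<i> * complex_of_real \<theta>)
                 * H (complex_of_real r * exp (\<i> * complex_of_real \<theta>))) < \<epsilon>"
proof (intro allI impI)
  fix e :: real assume e: "e > 0"
  show "\<exists>R. \<forall>r \<theta>. r > R \<and> - pi < \<theta> \<and> \<theta> < pi \<longrightarrow>
           cmod (complex_of_real r * exp (\<i> * complex_of_real \<theta>)
                 * H (complex_of_real r * exp (\<i> * complex_of_real \<theta>))) < e"
  proof (intro exI allI impI)
    fix r \<theta> :: real assume h: "r > max 4 (1 + exp (4/e)) \<and> - pi < \<theta> \<and> \<theta> < pi"
    have "norm (complex_of_real r * exp (\<i> * complex_of_real \<theta>)) = r"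
      using h by (simp add: norm_mult)
    thus "cmod (complex_of_real r * exp (\<i> * complex_of_real \<theta>)
                 * H (complex_of_real r * exp (\<i> * complex_of_real \<theta>))) < e"
      using key[OF e] h by simp
  qed
qed

end
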